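(* (Higher-dimensional analogue of Theorem 1 for knots in $S^{4n+1}$.) The set of functions $\{\sigma_\omega\}_{\omega\in S}$ is linearly independent as a set of real-valued functions on the set of all $(4n+1)$-Seifert matrices: if $\omega_1,\dots,\omega_N\in S$ are distinct and $\sum_i c_i\sigma_{\omega_i}(V)=0$ for all such $V$, with $c_i\in\mathbb{R}$, then all $c_i=0$.
   Context: A $(4n+1)$-Seifert matrix (Seifert matrix of a knot in $S^{4n+1}$) is a $2g\times2g$ integral matrix $V$ with $\det(V+V^T)=\pm1$. For a unit complex number $\omega$, its signature is $\sigma_\omega(V)=\mathrm{sign}\big[(\omega-\bar\omega)\big((1-\omega)V-(1-\bar\omega)V^T\big)\big]$, and its Alexander polynomial is $\Delta_V(t)=\det(tV+V^T)$. $S$ is the set of unit complex numbers with positive imaginary part. *)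

theory Defs
  imports "Jordan_Normal_Form.Matrix" "Jordan_Normal_Form.Char_Poly"
begin

definition mat_signature :: "complex mat \<Rightarrow> int" where
  "mat_signature A =
     int (\<Sum>x\<in>{x. poly (char_poly A) x = 0 \<and> Im x = 0 \<and> Re x > 0}. order x (char_poly A))
   - int (\<Sum>x\<in>{x. poly (char_poly A) x = 0 \<and> Im x = 0 \<and> Re x < 0}. order x (char_poly A))"

definition seifert_matrix :: "int mat \<Rightarrow> bool" where
  "seifert_matrix V \<longleftrightarrow>
     (\<exists>g. V \<in> carrier_mat (2*g) (2*g)) \<and>
     (det (V + transpose_mat V) = 1 \<or> det (V + transpose_mat V) = -1)"

definition tristram_sig :: "complex \<Rightarrow> int mat \<Rightarrow> int" where
  "tristram_sig \<omega> V =
     (let W = map_mat complex_of_int V in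
      mat_signature ((\<omega> - cnj \<omega>) \<cdot>\<^sub>m ((1 - \<omega>) \<cdot>\<^sub>m W - (1 - cnj \<omega>) \<cdot>\<^sub>m transpose_mat W)))"

definition alexander_poly :: "int mat \<Rightarrow> int poly" where
  "alexander_poly V = det ([:0, 1:] \<cdot>\<^sub>m map_mat (\<lambda>a. [:a:]) V + map_mat (\<lambda>a. [:a:]) (transpose_mat V))"

definition upper_unit_circle :: "complex set" where
  "upper_unit_circle = {\<omega>. cmod \<omega> = 1 \<and> Im \<omega> > 0}"

end

theory Submission
  imports Defs "Jordan_Normal_Form.Schur_Decomposition"
begin


lemma order_prod_linear:
  "Polynomial.order x (\<Prod>a\<leftarrow>es. [:- a, 1:]) = count_list es (x::'a::idom)"
proof (induction es)
  case Nil
  then show ?case by (simp add: order_0I)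
next
  case (Cons a es)
  have nz: "(\<Prod>a\<leftarrow>es. [:- a, 1::'a:]) \<noteq> 0"
    by (auto simp: prod_list_zero_iff)
  have l: "[:- a, 1::'a:] \<noteq> 0" by simp
  have "[:- a, 1::'a:] * (\<Prod>a\<leftarrow>es. [:- a, 1:]) \<noteq> 0" by (rule no_zero_divisors[OF l nz])
  then have "Polynomial.order x ([:- a, 1::'a:] * (\<Prod>a\<leftarrow>es. [:- a, 1:])) = Polynomial.order x [:- a, 1::'a:] + Polynomial.order x (\<Prod>a\<leftarrow>es. [:- a, 1:])"
    by (rule order_mult)
  then show ?case using Cons by (simp add: order_linear')
qed

lemma count_list_map_inj: "inj f \<Longrightarrow> count_list (map f xs) (f x) = count_list xs x"
  by (induction xs) (auto dest: injD)

lemma count_list_filter: "P x \<Longrightarrow> count_list (filter P xs) x = count_list xs x"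
  by (induction xs) auto

lemma sum_order_filter:
  fixes rs :: "real list"
  shows "(\<Sum>x\<in>complex_of_real ` {r \<in> set rs. P r}. Polynomial.order x (\<Prod>a\<leftarrow>map complex_of_real rs. [:- a, 1:]))
     = length (filter P rs)"
proof -
  have inj: "inj complex_of_real" by (simp add: inj_on_def)
  have op: "Polynomial.order x (\<Prod>a\<leftarrow>map complex_of_real rs. [:- a, 1:]) = count_list (map complex_of_real rs) x" for x
    by (rule order_prod_linear)
  have "(\<Sum>x\<in>complex_of_real ` {r \<in> set rs. P r}. Polynomial.order x (\<Prod>a\<leftarrow>map complex_of_real rs. [:- a, 1:]))
      = (\<Sum>r\<in>{r \<in> set rs. P r}. count_list rs r)"
    unfolding op by (subst sum.reindex, simp add: inj_on_def, simp add: count_list_map_inj[OF inj])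
  also have "\<dots> = (\<Sum>r\<in>set (filter P rs). count_list (filter P rs) r)"
    by (rule sum.cong, auto simp: count_list_filter)
  also have "\<dots> = length (filter P rs)" by (rule sum_count_set, auto)
  finally show ?thesis .
qed

lemma sig_from_roots:
  assumes cp: "char_poly A = (\<Prod>a\<leftarrow>map complex_of_real rs. [:-a,1:])"
  shows "mat_signature A = int (length (filter (\<lambda>r. r>0) rs)) - int (length (filter (\<lambda>r. r<0) rs))"
proof -
  have roots: "poly (char_poly A) x = 0 \<longleftrightarrow> x \<in> complex_of_real ` set rs" for x
    unfolding cp by (simp add: poly_prod_list prod_list_zero_iff) (auto simp: image_iff)
  have s1: "{x. poly (char_poly A) x = 0 \<and> Im x = 0 \<and> Re x > 0} = complex_of_real ` {r \<in> set rs. r > 0}"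
    unfolding roots by auto
  have s2: "{x. poly (char_poly A) x = 0 \<and> Im x = 0 \<and> Re x < 0} = complex_of_real ` {r \<in> set rs. r < 0}"
    unfolding roots by auto
  show ?thesis unfolding mat_signature_def s1 s2 unfolding cp sum_order_filter by (rule refl)
qed

lemma herm_eig_real:
  fixes H :: "complex mat"
  assumes H: "H \<in> carrier_mat n n"
    and herm: "\<And>i j. i<n \<Longrightarrow> j<n \<Longrightarrow> H$$(j,i) = cnj (H$$(i,j))"
    and ev: "eigenvector H v e"
  shows "Im e = 0"
proof -
  from ev H have v: "v \<in> carrier_vec n" and v0: "v \<noteq> 0\<^sub>v n" and Hv: "H *\<^sub>v v = e \<cdot>\<^sub>v v"
    unfolding eigenvector_def by auto
  have comp: "(\<Sum>j<n. H$$(i,j) * v$j) = e * v$i" if i: "i<n" for i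
  proof -
    have "(H *\<^sub>v v) $ i = e * v$i" using Hv i v by simp
    moreover have "(H *\<^sub>v v) $ i = (\<Sum>j<n. H$$(i,j) * v$j)"
      using i H v by (simp add: scalar_prod_def atLeast0LessThan)
    ultimately show ?thesis by simp
  qed
  define q where "q = (\<Sum>i<n. cnj(v$i) * (\<Sum>j<n. H$$(i,j)*v$j))"
  define S where "S = (\<Sum>i<n. v$i * cnj(v$i))"
  have "q = (\<Sum>i<n. e * (v$i * cnj(v$i)))" unfolding q_def
  proof (rule sum.cong[OF refl])
    fix i assume "i \<in> {..<n}" then have i: "i<n" by simp
    have "cnj(v$i) * (\<Sum>j<n. H$$(i,j)*v$j) = cnj(v$i) * (e * v$i)" by (simp only: comp[OF i])
    also have "\<dots> = e * (v$i * cnj(v$i))" by (simp only: mult_ac)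
    finally show "cnj(v$i) * (\<Sum>j<n. H$$(i,j)*v$j) = e * (v$i * cnj(v$i))" .
  qed
  then have q1: "q = e * S" unfolding S_def by (simp only: sum_distrib_left)
  have "cnj q = (\<Sum>i<n. \<Sum>j<n. v$i * (cnj (H$$(i,j)) * cnj (v$j)))"
    unfolding q_def by (simp only: cnj_sum complex_cnj_mult complex_cnj_cnj sum_distrib_left)
  also have "\<dots> = (\<Sum>i<n. \<Sum>j<n. v$i * (H$$(j,i) * cnj (v$j)))"
  proof (rule sum.cong[OF refl], rule sum.cong[OF refl])
    fix i j assume "i \<in> {..<n}" "j \<in> {..<n}"
    then have "H$$(j,i) = cnj (H$$(i,j))" by (intro herm) auto
    then show "v$i * (cnj (H$$(i,j)) * cnj (v$j)) = v$i * (H$$(j,i) * cnj (v$j))" by simp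
  qed
  also have "\<dots> = (\<Sum>j<n. \<Sum>i<n. v$i * (H$$(j,i) * cnj (v$j)))"
    by (rule sum.swap)
  also have "\<dots> = (\<Sum>j<n. \<Sum>i<n. cnj (v$j) * (H$$(j,i) * v$i))"
    by (rule sum.cong[OF refl], rule sum.cong[OF refl], simp only: mult_ac)
  also have "\<dots> = q" unfolding q_def by (simp only: sum_distrib_left)
  finally have q2: "cnj q = q" .
  have Sr: "S = complex_of_real (\<Sum>i<n. (Re (v$i))^2 + (Im (v$i))^2)"
    unfolding S_def by (simp only: complex_mult_cnj of_real_sum)
  have "\<exists>i<n. v$i \<noteq> 0"
  proof (rule ccontr)
    assume "\<not> ?thesis"
    then have "v = 0\<^sub>v n" using v by (intro eq_vecI) auto
    with v0 show False by simp
  qed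
  then obtain i where i: "i<n" "v$i \<noteq> 0" by blast
  have "(Re (v$i))^2 + (Im (v$i))^2 > 0" using i(2) by (simp add: complex_eq_iff sum_power2_gt_zero_iff)
  then have pos: "(\<Sum>i<n. (Re (v$i))^2 + (Im (v$i))^2) > 0"
    by (intro sum_pos2[of _ i]) (use i in auto)
  have S0: "S \<noteq> 0" unfolding Sr using pos by (simp only: of_real_eq_0_iff)
  have Sreal: "cnj S = S" unfolding Sr by (rule complex_cnj_complex_of_real)
  have "cnj e * S = cnj (e * S)" using Sreal by simp
  also have "\<dots> = cnj q" using q1 by simp
  also have "\<dots> = q" by (rule q2)
  also have "\<dots> = e * S" by (rule q1)
  finally have "cnj e * S = e * S" .
  with S0 have "cnj e = e" by simp
  then have "Im (cnj e) = Im e" by simp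
  then show ?thesis by simp
qed

definition tr :: "complex mat \<Rightarrow> complex" where
  "tr A = (\<Sum>i<dim_row A. A $$ (i,i))"

lemma tr_mult_comm:
  assumes A: "A \<in> carrier_mat n m" and B: "B \<in> carrier_mat m n"
  shows "tr (A * B) = tr (B * A)"
proof -
  have "tr (A * B) = (\<Sum>i<n. \<Sum>k<m. A$$(i,k) * B$$(k,i))"
    unfolding tr_def using A B by (simp add: scalar_prod_def atLeast0LessThan)
  also have "\<dots> = (\<Sum>k<m. \<Sum>i<n. B$$(k,i) * A$$(i,k))"
    by (subst sum.swap) (simp add: mult.commute)
  also have "\<dots> = tr (B * A)"
    unfolding tr_def using A B by (simp add: scalar_prod_def atLeast0LessThan)
  finally show ?thesis .
qed

lemma herm_eigs:
  fixes H :: "complex mat"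
  assumes H: "H \<in> carrier_mat n n"
    and herm: "\<And>i j. i<n \<Longrightarrow> j<n \<Longrightarrow> H$$(j,i) = cnj (H$$(i,j))"
  shows "\<exists>rs. length rs = n \<and> char_poly H = (\<Prod>a\<leftarrow>map complex_of_real rs. [:-a,1:])
     \<and> det H = complex_of_real (prod_list rs) \<and> tr H = complex_of_real (sum_list rs)"
proof -
  obtain es where cp: "char_poly H = (\<Prod>a\<leftarrow>es. [:- a, 1:])" and len: "length es = n"
    using char_poly_factorized[OF H] by blast
  obtain B P Q where sd: "schur_decomposition H es = (B,P,Q)"
    by (cases "schur_decomposition H es") auto
  from schur_decomposition[OF H cp sd]
  have sim: "similar_mat_wit H B P Q" and ut: "upper_triangular B" and dg: "diag_mat B = es"
    by auto
  from sim H have B: "B \<in> carrier_mat n n" and P: "P \<in> carrier_mat n n" and Q: "Q \<in> carrier_mat n n"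
    and QP: "Q * P = 1\<^sub>m n" and HPBQ: "H = P * B * Q"
    unfolding similar_mat_wit_def Let_def by auto
  have "det H = det B" using sim by (intro det_similar) (auto simp: similar_mat_def)
  also have "\<dots> = prod_list es" using det_upper_triangular[OF ut B] dg by simp
  finally have dH: "det H = prod_list es" .
  have "tr H = tr (P * (B * Q))" using HPBQ P B Q by (simp add: assoc_mult_mat[of P n n B n Q n])
  also have "\<dots> = tr ((B * Q) * P)" by (rule tr_mult_comm[OF P], use B Q in auto)
  also have "\<dots> = tr B" using B Q P QP by (simp add: assoc_mult_mat[of B n n Q n P n])
  also have "\<dots> = sum_list es"
  proof -
    have "sum_list es = sum_list (map (\<lambda>i. B $$ (i,i)) [0..<n])" using dg B by (simp add: diag_mat_def)
    also have "\<dots> = (\<Sum>i\<in>set [0..<n]. B$$(i,i))" by (rule sum_set_upt_conv_sum_list_nat[symmetric])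
    also have "\<dots> = tr B" unfolding tr_def using B by (simp add: atLeast0LessThan)
    finally show ?thesis by simp
  qed
  finally have tH: "tr H = sum_list es" .
  have real: "Im e = 0" if e: "e \<in> set es" for e
  proof -
    have "poly (char_poly H) e = 0" unfolding cp using e
      by (auto simp: poly_prod_list prod_list_zero_iff)
    then have "eigenvalue H e" using eigenvalue_root_char_poly[OF H] by simp
    then obtain v where "eigenvector H v e" unfolding eigenvalue_def by blast
    from herm_eig_real[OF H herm this] show ?thesis .
  qed
  define rs where "rs = map Re es"
  have es: "es = map complex_of_real rs" unfolding rs_def map_map
    by (rule sym, rule map_idI) (simp add: complex_eq_iff real)
  have "prod_list (map complex_of_real rs) = complex_of_real (prod_list rs)" by (induction rs) auto
  then have "prod_list es = complex_of_real (prod_list rs)" by (simp only: es)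
  moreover have "sum_list (map complex_of_real rs) = complex_of_real (sum_list rs)" by (induction rs) auto
  then have "sum_list es = complex_of_real (sum_list rs)" by (simp only: es)
  moreover have "length rs = n" using len unfolding rs_def by simp
  ultimately show ?thesis using dH tH cp es by (intro exI[of _ rs]) simp
qed



lemma four_sig:
  fixes a b c d :: real
  assumes s: "a + b + c + d = 0" and nz: "a * b * c * d \<noteq> 0"
  shows "a * b * c * d < 0 \<Longrightarrow> length (filter (\<lambda>r. r>0) [a,b,c,d]) \<noteq> length (filter (\<lambda>r. r<0) [a,b,c,d])"
    and "a * b * c * d > 0 \<Longrightarrow> length (filter (\<lambda>r. r>0) [a,b,c,d]) = length (filter (\<lambda>r. r<0) [a,b,c,d])"
proof -
  from nz have a: "a \<noteq> 0" and b: "b \<noteq> 0" and c: "c \<noteq> 0" and d: "d \<noteq> 0" by auto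
  have A: "a > 0 \<or> a < 0" using a by linarith
  have B: "b > 0 \<or> b < 0" using b by linarith
  have C: "c > 0 \<or> c < 0" using c by linarith
  have D: "d > 0 \<or> d < 0" using d by linarith
  show "a * b * c * d < 0 \<Longrightarrow> length (filter (\<lambda>r. r>0) [a,b,c,d]) \<noteq> length (filter (\<lambda>r. r<0) [a,b,c,d])"
    using A B C D s by (auto simp: mult_less_0_iff zero_less_mult_iff)
  show "a * b * c * d > 0 \<Longrightarrow> length (filter (\<lambda>r. r>0) [a,b,c,d]) = length (filter (\<lambda>r. r<0) [a,b,c,d])"
    using A B C D s by (auto simp: mult_less_0_iff zero_less_mult_iff)
qed


lemma det2: assumes "A \<in> carrier_mat 2 2"
  shows "det A = A$$(0,0) * A$$(1,1) - A$$(0,1) * A$$(1,0)"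
proof -
  have "det A = (\<Sum>j<2. A $$ (0,j) * cofactor A 0 j)"
    by (rule laplace_expansion_row[OF assms], simp)
  also have "\<dots> = A$$(0,0) * A$$(1,1) - A$$(0,1) * A$$(1,0)"
    using assms by (simp add: numeral_2_eq_2 cofactor_def det_def mat_delete_def insert_index_def)
  finally show ?thesis .
qed

definition d3 :: "'a::comm_ring_1 \<Rightarrow> 'a \<Rightarrow> 'a \<Rightarrow> 'a \<Rightarrow> 'a \<Rightarrow> 'a \<Rightarrow> 'a \<Rightarrow> 'a \<Rightarrow> 'a \<Rightarrow> 'a" where
  "d3 a b c d e f g h i = a * (e * i - f * h) - b * (d * i - f * g) + c * (d * h - e * g)"

lemma det3: assumes A: "A \<in> carrier_mat 3 3"
  shows "det A = d3 (A$$(0,0)) (A$$(0,1)) (A$$(0,2)) (A$$(1,0)) (A$$(1,1)) (A$$(1,2)) (A$$(2,0)) (A$$(2,1)) (A$$(2,2))"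
proof -
  have c: "\<And>j. mat_delete A 0 j \<in> carrier_mat 2 2" using mat_delete_carrier[OF A] by simp
  show ?thesis
    apply (subst laplace_expansion_row[OF A, of 0], simp)
    apply (simp add: cofactor_def det2[OF c])
    using A apply (simp add: eval_nat_numeral mat_delete_def insert_index_def d3_def)
    apply (simp add: algebra_simps)
    done
qed

lemma det4: assumes A: "A \<in> carrier_mat 4 4"
  shows "det A =
      A$$(0,0) * d3 (A$$(1,1)) (A$$(1,2)) (A$$(1,3)) (A$$(2,1)) (A$$(2,2)) (A$$(2,3)) (A$$(3,1)) (A$$(3,2)) (A$$(3,3))
    - A$$(0,1) * d3 (A$$(1,0)) (A$$(1,2)) (A$$(1,3)) (A$$(2,0)) (A$$(2,2)) (A$$(2,3)) (A$$(3,0)) (A$$(3,2)) (A$$(3,3))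
    + A$$(0,2) * d3 (A$$(1,0)) (A$$(1,1)) (A$$(1,3)) (A$$(2,0)) (A$$(2,1)) (A$$(2,3)) (A$$(3,0)) (A$$(3,1)) (A$$(3,3))
    - A$$(0,3) * d3 (A$$(1,0)) (A$$(1,1)) (A$$(1,2)) (A$$(2,0)) (A$$(2,1)) (A$$(2,2)) (A$$(3,0)) (A$$(3,1)) (A$$(3,2))"
proof -
  have c: "\<And>j. mat_delete A 0 j \<in> carrier_mat 3 3" using mat_delete_carrier[OF A] by simp
  show ?thesis
    apply (subst laplace_expansion_row[OF A, of 0], simp)
    apply (simp add: cofactor_def det3[OF c])
    using A apply (simp add: eval_nat_numeral mat_delete_def insert_index_def)
    done
qed

definition Vx :: "int \<Rightarrow> int \<Rightarrow> int mat" where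
  "Vx X t = mat 4 4 (\<lambda>(i,j). [[0,0,1,1],[1,0,X+t,t],[-1,-(X+t),0,0],[-1,-t,1,0]] ! i ! j)"

lemma Vx_carrier: "Vx X t \<in> carrier_mat 4 4" unfolding Vx_def by simp

lemma Vx_seifert: "seifert_matrix (Vx X t)"
proof -
  have "Vx X t \<in> carrier_mat (2*2) (2*2)" using Vx_carrier by simp
  moreover have "det (Vx X t + transpose_mat (Vx X t)) = 1"
    by (subst det4) (auto simp: Vx_def d3_def eval_nat_numeral)
  ultimately show ?thesis unfolding seifert_matrix_def by blast
qed

definition Hm :: "complex \<Rightarrow> int mat \<Rightarrow> complex mat" where
  "Hm w V = (let W = map_mat complex_of_int V in
      (w - cnj w) \<cdot>\<^sub>m ((1 - w) \<cdot>\<^sub>m W - (1 - cnj w) \<cdot>\<^sub>m transpose_mat W))"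

lemma tristram_Hm: "tristram_sig w V = mat_signature (Hm w V)"
  unfolding tristram_sig_def Hm_def by (simp add: Let_def)

lemma Hm_carrier: "V \<in> carrier_mat n n \<Longrightarrow> Hm w V \<in> carrier_mat n n"
  unfolding Hm_def Let_def by auto

lemma Hm_index: "V \<in> carrier_mat n n \<Longrightarrow> i < n \<Longrightarrow> j < n \<Longrightarrow>
   Hm w V $$ (i,j) = (w - cnj w) * ((1 - w) * of_int (V$$(i,j)) - (1 - cnj w) * of_int (V$$(j,i)))"
  unfolding Hm_def Let_def by auto

lemma Hm_herm: "V \<in> carrier_mat n n \<Longrightarrow> i < n \<Longrightarrow> j < n \<Longrightarrow>
   Hm w V $$ (j,i) = cnj (Hm w V $$ (i,j))"
  by (simp add: Hm_index algebra_simps)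

definition gp :: "real \<Rightarrow> real \<Rightarrow> real \<Rightarrow> real" where
  "gp X t y = 4*(X^2+X+t)*y^2 - (4*X+8*t)*y + 1"

lemma Vx_index: "i < 4 \<Longrightarrow> j < 4 \<Longrightarrow> Vx X t $$ (i,j) = [[0,0,1,1],[1,0,X+t,t],[-1,-(X+t),0,0],[-1,-t,1,0]] ! i ! j"
  by (simp add: Vx_def)

lemma det_Hm_c:
  fixes w :: complex and X t :: int
  assumes w0: "w \<noteq> 0" and cw: "cnj w = inverse w"
  shows "det (Hm w (Vx X t)) = (let z = inverse w; y = 1 - (w + z)/2 in
     4 * (w - z)^4 * y^2 * (4*(of_int X^2+of_int X+of_int t)*y^2 - (4*of_int X+8*of_int t)*y + 1))"
  apply (subst det4[OF Hm_carrier[OF Vx_carrier]])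
  apply (simp add: Hm_index[OF Vx_carrier] Vx_index d3_def cw Let_def)
  using w0 apply (simp add: field_simps)
  apply (Groebner_Basis.algebra)
  done

lemma det_Hm:
  fixes w :: complex and X t :: int
  assumes w1: "cmod w = 1"
  shows "det (Hm w (Vx X t)) = complex_of_real (64 * (Im w)^4 * (1 - Re w)^2 * gp (of_int X) (of_int t) (1 - Re w))"
proof -
  have w0: "w \<noteq> 0" using w1 by auto
  have "w * cnj w = 1" using w1 complex_norm_square[of w] by simp
  then have z: "inverse w = cnj w" by (rule inverse_unique)
  have cw: "cnj w = inverse w" using z by simp
  have a: "w + cnj w = complex_of_real (2 * Re w)" by (rule complex_add_cnj)
  have b: "(w - cnj w)^4 = complex_of_real (16 * (Im w)^4)"
    by (simp add: complex_diff_cnj power_mult_distrib)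
  have y: "1 - (w + cnj w)/2 = complex_of_real (1 - Re w)" unfolding a by simp
  show ?thesis
    unfolding det_Hm_c[OF w0 cw] Let_def z y b gp_def by simp
qed



lemma gp_exists:
  fixes y0 y1 :: real
  assumes y0: "0 < y0" and y01: "y0 < y1" and y1: "y1 < 2"
  shows "\<exists>(X::int) (t::int). gp (of_int X) (of_int t) y0 < 0 \<and> (\<forall>y. y1 \<le> y \<longrightarrow> gp (of_int X) (of_int t) y > 0)"
proof -
  define p where "p = 2 - y0"
  define q where "q = 2 - y1"
  have p: "p > 0" and q: "q > 0" using assms by (auto simp: p_def q_def)
  define c0 where "c0 = 1 / (4 * y0 * p)"
  have c0: "c0 > 0" using y0 p by (simp add: c0_def)
  define \<delta> where "\<delta> = y1 / q - y0 / p"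
  have "y0 * q < y1 * p" using assms by (simp add: p_def q_def algebra_simps)
  then have "y0 / p < y1 / q" using p q by (simp add: field_simps)
  then have dpos: "\<delta> > 0" by (simp add: \<delta>_def)
  obtain Xn :: nat where Xn: "(1 + c0 + 1/q) / \<delta> < real Xn" using reals_Archimedean2 by blast
  define X :: nat where "X = Suc Xn"
  have X1: "real X \<ge> 1" by (simp add: X_def)
  have "(1 + c0 + 1/q) / \<delta> < real X" using Xn by (simp add: X_def)
  then have Xd: "1 + c0 + 1/q \<le> real X * \<delta>" using dpos by (simp add: field_simps)
  define K where "K = real X * real X + real X"
  have "(real X - 1) * (1 + c0) \<ge> 0" using X1 c0 by simp
  then have "1 + c0 + real X / q \<le> real X * (1 + c0 + 1/q)"
    by (simp add: algebra_simps)
  also have "\<dots> \<le> real X * (real X * \<delta>)" using Xd X1 by simp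
  also have "\<dots> \<le> K * \<delta>" unfolding K_def using dpos by (simp add: algebra_simps)
  finally have Kd: "K * \<delta> \<ge> 1 + c0 + real X / q" .
  define t :: int where "t = \<lfloor>K * y0 / p + c0\<rfloor> + 1"
  have t1: "real_of_int t > K * y0 / p + c0" unfolding t_def by linarith
  have t2: "real_of_int t \<le> K * y0 / p + c0 + 1" unfolding t_def by linarith
  have Kpos: "K > 0" unfolding K_def using X1 by (simp add: add_pos_nonneg)
  have "K * y0 / p > 0" using Kpos y0 p by simp
  then have t0: "real_of_int t > 0" using t1 c0 by linarith
  have tB: "real_of_int t * q \<le> K * y1 - real X"
  proof -
    have "real_of_int t \<le> K * y1 / q - real X / q" using t2 Kd unfolding \<delta>_def by (simp add: algebra_simps)
    then show ?thesis using q by (simp add: field_simps)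
  qed
  have tA: "4 * real_of_int t * y0 * p > 4 * K * y0^2 + 1"
  proof -
    have "real_of_int t * (4 * y0 * p) > (K * y0 / p + c0) * (4 * y0 * p)"
      using t1 y0 p by simp
    also have "(K * y0 / p + c0) * (4 * y0 * p) = 4 * K * y0^2 + 1"
      unfolding c0_def using y0 p by (simp add: field_simps power2_eq_square)
    finally show ?thesis by (simp add: algebra_simps)
  qed
  have A: "gp (real X) (real_of_int t) y0 < 0"
  proof -
    have "gp (real X) (real_of_int t) y0 = 4*K*y0^2 + 1 - 4*real_of_int t*y0*p - 4*real X*y0"
      unfolding gp_def K_def p_def by (simp add: algebra_simps power2_eq_square)
    moreover have "real X * y0 \<ge> 0" using y0 by simp
    ultimately show ?thesis using tA by (simp add: algebra_simps)
  qed
  have B: "gp (real X) (real_of_int t) y > 0" if y: "y1 \<le> y" for y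
  proof -
    have "(K + real_of_int t) * y1 \<ge> real X + 2 * real_of_int t"
      using tB unfolding q_def by (simp add: algebra_simps)
    moreover have "(K + real_of_int t) * y \<ge> (K + real_of_int t) * y1"
      using y Kpos t0 by (simp add: mult_left_mono)
    ultimately have "(K + real_of_int t) * y - real X - 2 * real_of_int t \<ge> 0" by simp
    moreover have "y > 0" using y y0 y01 by simp
    ultimately have "4 * y * ((K + real_of_int t) * y - real X - 2 * real_of_int t) \<ge> 0" by simp
    moreover have "gp (real X) (real_of_int t) y = 4 * y * ((K + real_of_int t) * y - real X - 2 * real_of_int t) + 1"
      unfolding gp_def K_def by (simp add: algebra_simps power2_eq_square)
    ultimately show ?thesis by simp
  qed
  show ?thesis
    by (rule exI[of _ "int X"], rule exI[of _ t]) (use A B in simp)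
qed


lemma upper_circle_facts:
  assumes "w \<in> upper_unit_circle"
  shows "Im w > 0" "cmod w = 1" "(Re w)^2 + (Im w)^2 = 1" "Re w < 1" "Re w > -1"
proof -
  show im: "Im w > 0" and c: "cmod w = 1" using assms unfolding upper_unit_circle_def by auto
  show sq: "(Re w)^2 + (Im w)^2 = 1" using c unfolding cmod_def by simp
  have "(Im w)^2 > 0" using im by simp
  then have "(Re w)^2 < 1" using sq by linarith
  then have "\<bar>Re w\<bar> < 1" by (simp add: abs_square_less_1)
  then show "Re w < 1" "Re w > -1" by linarith+
qed

lemma upper_circle_eq:
  assumes "w \<in> upper_unit_circle" "u \<in> upper_unit_circle" "Re w = Re u"
  shows "w = u"
proof -
  have "(Im w)^2 = (Im u)^2" using upper_circle_facts(3)[OF assms(1)] upper_circle_facts(3)[OF assms(2)] assms(3) by simp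
  then have "Im w = Im u" using upper_circle_facts(1)[OF assms(1)] upper_circle_facts(1)[OF assms(2)]
    by (simp add: power2_eq_iff)
  then show ?thesis using assms(3) by (simp add: complex_eq_iff)
qed

lemma sig_Vx:
  fixes w :: complex and X t :: int
  assumes w: "w \<in> upper_unit_circle"
  shows "gp (of_int X) (of_int t) (1 - Re w) < 0 \<Longrightarrow> tristram_sig w (Vx X t) \<noteq> 0"
    and "gp (of_int X) (of_int t) (1 - Re w) > 0 \<Longrightarrow> tristram_sig w (Vx X t) = 0"
proof -
  define H where "H = Hm w (Vx X t)"
  have H: "H \<in> carrier_mat 4 4" unfolding H_def by (rule Hm_carrier[OF Vx_carrier])
  have herm: "\<And>i j. i<4 \<Longrightarrow> j<4 \<Longrightarrow> H$$(j,i) = cnj (H$$(i,j))"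
    unfolding H_def by (rule Hm_herm[OF Vx_carrier])
  obtain rs where len: "length rs = 4" and cp: "char_poly H = (\<Prod>a\<leftarrow>map complex_of_real rs. [:-a,1:])"
    and dH: "det H = complex_of_real (prod_list rs)" and tH: "tr H = complex_of_real (sum_list rs)"
    using herm_eigs[OF H herm] by blast
  have diag: "H $$ (i,i) = 0" if i: "i < 4" for i
  proof -
    have "Vx X t $$ (i,i) = 0" using i by (auto simp: Vx_index eval_nat_numeral less_Suc_eq)
    then show ?thesis unfolding H_def using i by (simp add: Hm_index[OF Vx_carrier])
  qed
  have "tr H = 0" unfolding tr_def using H diag by simp
  then have s: "sum_list rs = 0" using tH by simp
  have c1: "cmod w = 1" using upper_circle_facts[OF w] by simp
  have "complex_of_real (prod_list rs) = complex_of_real (64 * (Im w)^4 * (1 - Re w)^2 * gp (of_int X) (of_int t) (1 - Re w))"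
    using dH det_Hm[OF c1, of X t] unfolding H_def by simp
  then have pr: "prod_list rs = 64 * (Im w)^4 * (1 - Re w)^2 * gp (of_int X) (of_int t) (1 - Re w)"
    by (simp only: of_real_eq_iff)
  have fpos: "64 * (Im w)^4 * (1 - Re w)^2 > 0" using upper_circle_facts[OF w] by simp
  obtain a b c d where rs: "rs = [a,b,c,d]" using len
    by (auto simp: length_Suc_conv eval_nat_numeral)
  have sig: "tristram_sig w (Vx X t) = int (length (filter (\<lambda>r. r>0) [a,b,c,d])) - int (length (filter (\<lambda>r. r<0) [a,b,c,d]))"
    unfolding tristram_Hm H_def[symmetric] using sig_from_roots[OF cp] rs by simp
  have s4: "a + b + c + d = 0" using s rs by simp
  have p4: "a * b * c * d = 64 * (Im w)^4 * (1 - Re w)^2 * gp (of_int X) (of_int t) (1 - Re w)"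
    using pr rs by (simp add: mult.assoc)
  show "gp (of_int X) (of_int t) (1 - Re w) < 0 \<Longrightarrow> tristram_sig w (Vx X t) \<noteq> 0"
  proof -
    assume g: "gp (of_int X) (of_int t) (1 - Re w) < 0"
    have neg: "a * b * c * d < 0" unfolding p4 using fpos g by (simp add: mult_pos_neg)
    then have "a * b * c * d \<noteq> 0" by (metis less_irrefl)
    from four_sig(1)[OF s4 this neg] show ?thesis unfolding sig by simp
  qed
  show "gp (of_int X) (of_int t) (1 - Re w) > 0 \<Longrightarrow> tristram_sig w (Vx X t) = 0"
  proof -
    assume g: "gp (of_int X) (of_int t) (1 - Re w) > 0"
    have pos: "a * b * c * d > 0" unfolding p4 using fpos g by simp
    then have "a * b * c * d \<noteq> 0" by (metis less_irrefl)
    from four_sig(2)[OF s4 this pos] show ?thesis unfolding sig by simp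
  qed
qed

theorem mainTheorem9:
  fixes N :: nat and \<omega> :: "nat \<Rightarrow> complex" and c :: "nat \<Rightarrow> real"
  assumes "\<forall>i<N. \<omega> i \<in> upper_unit_circle"
    and "inj_on \<omega> {..<N}"
    and "\<forall>V. seifert_matrix V \<longrightarrow> (\<Sum>i<N. c i * real_of_int (tristram_sig (\<omega> i) V)) = 0"
  shows "\<forall>i<N. c i = 0"
proof (rule ccontr)
  assume nz: "\<not> (\<forall>i<N. c i = 0)"
  have circ: "\<And>i. i < N \<Longrightarrow> \<omega> i \<in> upper_unit_circle" using assms(1) by blast
  define J where "J = {i. i < N \<and> c i \<noteq> 0}"
  have Jf: "finite J" unfolding J_def by simp
  have Jne: "J \<noteq> {}" using nz unfolding J_def by auto
  define m where "m = Max ((\<lambda>i. Re (\<omega> i)) ` J)"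
  have "m \<in> (\<lambda>i. Re (\<omega> i)) ` J" unfolding m_def using Jf Jne by (intro Max_in) auto
  then obtain j where jJ: "j \<in> J" and jm: "Re (\<omega> j) = m" by auto
  have jmax: "Re (\<omega> i) \<le> Re (\<omega> j)" if "i \<in> J" for i
    unfolding jm m_def using Jf that by (intro Max_ge) auto
  have jN: "j < N" and cj: "c j \<noteq> 0" using jJ unfolding J_def by auto
  define x where "x = Re (\<omega> j)"
  define A where "A = {Re (\<omega> i) | i. i < N \<and> Re (\<omega> i) < x}"
  have Af: "finite A" unfolding A_def by simp
  define a where "a = Max (insert (-1) A)"
  have a1: "a \<ge> -1" unfolding a_def using Af by simp
  have aA: "r \<le> a" if "r \<in> A" for r unfolding a_def using Af that by simp
  have ax: "a < x"
  proof -
    have "a \<in> insert (-1) A" unfolding a_def using Af by (intro Max_in) auto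
    moreover have "-1 < x" unfolding x_def using upper_circle_facts(5)[OF circ[OF jN]] .
    ultimately show ?thesis unfolding A_def by auto
  qed
  define y0 where "y0 = 1 - x"
  define y1 where "y1 = (y0 + (1 - a)) / 2"
  have y0: "0 < y0" unfolding y0_def x_def using upper_circle_facts(4)[OF circ[OF jN]] by simp
  have y01: "y0 < y1" unfolding y1_def y0_def using ax by simp
  have y1: "y1 < 2" unfolding y1_def y0_def using ax a1 by simp
  obtain X t :: int where g0: "gp (of_int X) (of_int t) y0 < 0"
    and g1: "\<forall>y. y1 \<le> y \<longrightarrow> gp (of_int X) (of_int t) y > 0"
    using gp_exists[OF y0 y01 y1] by blast
  have sum0: "(\<Sum>i<N. c i * real_of_int (tristram_sig (\<omega> i) (Vx X t))) = 0"
    using assms(3) Vx_seifert by blast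
  have sj: "tristram_sig (\<omega> j) (Vx X t) \<noteq> 0"
    using sig_Vx(1)[OF circ[OF jN]] g0 unfolding y0_def x_def by simp
  have others: "c i * real_of_int (tristram_sig (\<omega> i) (Vx X t)) = 0" if i: "i \<in> {..<N} - {j}" for i
  proof (cases "c i = 0")
    case True then show ?thesis by simp
  next
    case False
    have iN: "i < N" and ij: "i \<noteq> j" using i by auto
    have "i \<in> J" using iN False unfolding J_def by simp
    then have le: "Re (\<omega> i) \<le> x" unfolding x_def by (rule jmax)
    have "Re (\<omega> i) \<noteq> x"
    proof
      assume "Re (\<omega> i) = x"
      then have "\<omega> i = \<omega> j" using upper_circle_eq[OF circ[OF iN] circ[OF jN]] unfolding x_def by simp
      then have "i = j" using assms(2) iN jN by (auto dest: inj_onD)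
      with ij show False by simp
    qed
    with le have "Re (\<omega> i) < x" by simp
    then have "Re (\<omega> i) \<in> A" unfolding A_def using iN by blast
    then have "Re (\<omega> i) \<le> a" by (rule aA)
    then have "y1 \<le> 1 - Re (\<omega> i)" unfolding y1_def y0_def using ax by simp
    then have "gp (of_int X) (of_int t) (1 - Re (\<omega> i)) > 0" using g1 by blast
    then have "tristram_sig (\<omega> i) (Vx X t) = 0" by (rule sig_Vx(2)[OF circ[OF iN]])
    then show ?thesis by simp
  qed
  have "(\<Sum>i<N. c i * real_of_int (tristram_sig (\<omega> i) (Vx X t)))
      = c j * real_of_int (tristram_sig (\<omega> j) (Vx X t)) + (\<Sum>i\<in>{..<N} - {j}. c i * real_of_int (tristram_sig (\<omega> i) (Vx X t)))"
    using jN by (subst sum.remove[of _ j]) auto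
  also have "(\<Sum>i\<in>{..<N} - {j}. c i * real_of_int (tristram_sig (\<omega> i) (Vx X t))) = 0"
    using others by (rule sum.neutral[OF ballI])
  finally have "c j * real_of_int (tristram_sig (\<omega> j) (Vx X t)) = 0" using sum0 by simp
  with sj cj show False by simp
qed

end
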